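(* Let $\bm S\in\mathcal{S}^N$ with eigendecomposition $\bm S=\bm Q\bm\Lambda\bm Q^T$, $\bm Q\in{\rm O}(N)$, $\bm\Lambda\in\mathcal{D}_N$ with non-increasing diagonal entries. Let $\bm\Lambda_o\in\mathcal{D}_N$ have non-increasing diagonal entries, let $0\le\epsilon<\infty$, and let $\mathcal{M}_\epsilon:=\{\bm V(\bm\Lambda_o+\bm\Lambda_\epsilon)\bm V^T:\ \bm V\in{\rm O}(N),\ \bm\Lambda_\epsilon\in\mathcal{D}_N,\ \Vert\bm\Lambda_\epsilon\Vert_2\le\epsilon\}$. Let $$\bm\Lambda_\epsilon^*:=\arg\min_{\bm\Lambda_\epsilon\in\mathcal{D}_N,\ \Vert\bm\Lambda_\epsilon\Vert_2\le\epsilon}\Vert\bm\Lambda-\bm\Lambda_o-\bm\Lambda_\epsilon\Vert_{\rm F}.$$ Then $\bm Q(\bm\Lambda_o+\bm\Lambda_\epsilon^* )\bm Q^T$ is a best approximant of $\bm S$ in $\mathcal{M}_\epsilon$ in the Frobenius norm, i.e., it belongs to $\mathcal{M}_\epsilon$ and minimizes $\Vert\bm S-\bm M\Vert_{\rm F}$ over $\bm M\in\mathcal{M}_\epsilon$.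
   Context: $\mathcal{S}^N$: real symmetric $N\times N$ matrices; $\mathcal{D}_N$: real $N\times N$ diagonal matrices; ${\rm O}(N)$: $N\times N$ orthogonal matrices; $\Vert\cdot\Vert_2$: spectral norm; $\Vert\cdot\Vert_{\rm F}$: Frobenius norm; non-increasing diagonal means $[\bm\Lambda]_{ii}\ge[\bm\Lambda]_{jj}$ for $i<j$. *)

theory Defs
  imports "HOL-Analysis.Analysis"
begin

text \<open>N x N real matrices are rendered as real^'n^'n with a finite, well-ordered index
type 'n (the order is needed to speak of non-increasing diagonals).\<close>

definition frob_norm :: "real^'n^'m \<Rightarrow> real" where
  "frob_norm A = sqrt (\<Sum>i\<in>UNIV. \<Sum>j\<in>UNIV. (A $ i $ j)^2)"

definition spec_norm :: "real^'n^'m \<Rightarrow> real" where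
  "spec_norm A = onorm (\<lambda>x. A *v x)"

definition diag_mat :: "real^'n^'n \<Rightarrow> bool" where
  "diag_mat A \<longleftrightarrow> (\<forall>i j. i \<noteq> j \<longrightarrow> A $ i $ j = 0)"

definition nonincr_diag :: "real^('n::{finite,linorder})^('n::{finite,linorder}) \<Rightarrow> bool" where
  "nonincr_diag A \<longleftrightarrow> (\<forall>i j. i < j \<longrightarrow> A $ j $ j \<le> A $ i $ i)"

definition symmetric_mat :: "real^'n^'n \<Rightarrow> bool" where
  "symmetric_mat A \<longleftrightarrow> transpose A = A"

definition M_eps :: "real^'n^'n \<Rightarrow> real \<Rightarrow> (real^'n^'n) set" where
  "M_eps Lo eps = {V ** (Lo + Le) ** transpose V | V Le.
       orthogonal_matrix V \<and> diag_mat Le \<and> spec_norm Le \<le> eps}"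

end

theory Submission
  imports Defs
begin

lemma abel_pos:
  fixes lam x y :: "'n::linorder \<Rightarrow> real"
  assumes "finite A"
    and "\<forall>i\<in>A. \<forall>j\<in>A. i < j \<longrightarrow> lam j \<le> lam i"
    and "\<forall>i\<in>A. 0 \<le> lam i"
    and "\<forall>k\<in>A. (\<Sum>i\<in>A\<inter>{..k}. x i) \<le> (\<Sum>i\<in>A\<inter>{..k}. y i)"
  shows "(\<Sum>i\<in>A. lam i * x i) \<le> (\<Sum>i\<in>A. lam i * y i)"
  using assms
proof (induction "card A" arbitrary: A lam)
  case 0
  then show ?case by simp
next
  case (Suc n)
  define m where "m = Max A"
  have ne: "A \<noteq> {}" using Suc.hyps(2) by auto
  have mA: "m \<in> A" using Suc.prems(1) ne by (simp add: m_def)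
  have mmax: "\<forall>i\<in>A. i \<le> m" using Suc.prems(1) by (simp add: m_def)
  define A' where "A' = A - {m}"
  have fA': "finite A'" using Suc.prems(1) by (simp add: A'_def)
  have cA': "n = card A'" using Suc.hyps(2) mA by (simp add: A'_def)
  define lam' where "lam' = (\<lambda>i. lam i - lam m)"
  have IH: "(\<Sum>i\<in>A'. lam' i * x i) \<le> (\<Sum>i\<in>A'. lam' i * y i)"
  proof (rule Suc.hyps(1)[OF cA' fA'])
    show "\<forall>i\<in>A'. \<forall>j\<in>A'. i < j \<longrightarrow> lam' j \<le> lam' i"
      using Suc.prems(2) by (auto simp: A'_def lam'_def)
    show "\<forall>i\<in>A'. 0 \<le> lam' i"
    proof
      fix i assume iA: "i \<in> A'"
      then have "i < m" using mmax by (auto simp: A'_def order.order_iff_strict)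
      then show "0 \<le> lam' i" using Suc.prems(2) mA iA by (auto simp: A'_def lam'_def)
    qed
    show "\<forall>k\<in>A'. (\<Sum>i\<in>A'\<inter>{..k}. x i) \<le> (\<Sum>i\<in>A'\<inter>{..k}. y i)"
    proof
      fix k assume k: "k \<in> A'"
      then have "k < m" using mmax by (auto simp: A'_def order.order_iff_strict)
      then have "A' \<inter> {..k} = A \<inter> {..k}" by (auto simp: A'_def)
      then show "(\<Sum>i\<in>A'\<inter>{..k}. x i) \<le> (\<Sum>i\<in>A'\<inter>{..k}. y i)"
        using Suc.prems(4) k by (simp add: A'_def)
    qed
  qed
  have tot: "(\<Sum>i\<in>A. x i) \<le> (\<Sum>i\<in>A. y i)"
  proof -
    have "A \<inter> {..m} = A" using mmax by auto
    then show ?thesis using Suc.prems(4) mA by metis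
  qed
  have dec: "\<And>z. (\<Sum>i\<in>A. lam i * z i) = (\<Sum>i\<in>A'. lam' i * z i) + lam m * (\<Sum>i\<in>A. z i)"
  proof -
    fix z :: "'n \<Rightarrow> real"
    have A: "A = insert m A'" using mA by (auto simp: A'_def)
    have "m \<notin> A'" by (simp add: A'_def)
    then have e1: "(\<Sum>i\<in>A. lam i * z i) = lam m * z m + (\<Sum>i\<in>A'. lam i * z i)"
      and e2: "(\<Sum>i\<in>A. z i) = z m + (\<Sum>i\<in>A'. z i)"
      by (simp_all add: A fA')
    have e3: "(\<Sum>i\<in>A'. lam' i * z i) = (\<Sum>i\<in>A'. lam i * z i) - lam m * (\<Sum>i\<in>A'. z i)"
      by (simp only: lam'_def left_diff_distrib sum_subtractf sum_distrib_left)
    show "(\<Sum>i\<in>A. lam i * z i) = (\<Sum>i\<in>A'. lam' i * z i) + lam m * (\<Sum>i\<in>A. z i)"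
      unfolding e1 e2 e3 by (simp add: distrib_left)
  qed
  have "lam m * (\<Sum>i\<in>A. x i) \<le> lam m * (\<Sum>i\<in>A. y i)"
    using tot Suc.prems(3) mA by (simp add: mult_left_mono)
  then show ?case using IH dec[of x] dec[of y] by linarith
qed

lemma abel_univ:
  fixes lam x y :: "'n::{finite,linorder} \<Rightarrow> real"
  assumes "\<forall>i j. i < j \<longrightarrow> lam j \<le> lam i"
    and "\<forall>k. (\<Sum>i\<in>{..k}. x i) \<le> (\<Sum>i\<in>{..k}. y i)"
    and "(\<Sum>i\<in>UNIV. x i) = (\<Sum>i\<in>UNIV. y i)"
  shows "(\<Sum>i\<in>UNIV. lam i * x i) \<le> (\<Sum>i\<in>UNIV. lam i * y i)"
proof -
  define c where "c = Min (range lam)"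
  have c: "\<And>i. c \<le> lam i" unfolding c_def by (rule Min_le) auto
  have ab: "(\<Sum>i\<in>UNIV. (lam i - c) * x i) \<le> (\<Sum>i\<in>UNIV. (lam i - c) * y i)"
  proof (rule abel_pos)
    show "\<forall>i\<in>UNIV. \<forall>j\<in>UNIV. i < j \<longrightarrow> lam j - c \<le> lam i - c" using assms(1) by simp
    show "\<forall>i\<in>UNIV. 0 \<le> lam i - c" using c by simp
    show "\<forall>k\<in>UNIV. (\<Sum>i\<in>UNIV\<inter>{..k}. x i) \<le> (\<Sum>i\<in>UNIV\<inter>{..k}. y i)" using assms(2) by simp
  qed simp
  have dz: "\<And>z. (\<Sum>i\<in>UNIV. lam i * z i) = (\<Sum>i\<in>UNIV. (lam i - c) * z i) + c * (\<Sum>i\<in>UNIV. z i)"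
    by (simp only: left_diff_distrib sum_subtractf sum_distrib_left)
  have "c * (\<Sum>i\<in>UNIV. x i) = c * (\<Sum>i\<in>UNIV. y i)" using assms(3) by simp
  then show ?thesis using ab dz[of x] dz[of y] by linarith
qed

lemma weights:
  fixes w e :: "'n::{finite,linorder} \<Rightarrow> real"
  assumes "\<forall>j. 0 \<le> w j \<and> w j \<le> 1"
    and "(\<Sum>j\<in>UNIV. w j) = real (card {..k})"
    and "\<forall>i j. i < j \<longrightarrow> e j \<le> e i"
  shows "(\<Sum>j\<in>UNIV. w j * e j) \<le> (\<Sum>j\<in>{..k}. e j)"
proof -
  define ind where "ind = (\<lambda>j. if j \<le> k then 1 else (0::real))"
  have "(\<Sum>j\<in>UNIV. ind j * e j) = (\<Sum>j\<in>UNIV. if j \<in> {..k} then e j else 0)"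
    by (rule sum.cong) (auto simp: ind_def)
  also have "\<dots> = (\<Sum>j\<in>UNIV \<inter> {..k}. e j)" by (rule sum.inter_restrict[symmetric]) simp
  finally have s1: "(\<Sum>j\<in>{..k}. e j) = (\<Sum>j\<in>UNIV. ind j * e j)" by simp
  have "(\<Sum>j\<in>UNIV. ind j) = (\<Sum>j\<in>UNIV. if j \<in> {..k} then 1 else 0)"
    by (rule sum.cong) (auto simp: ind_def)
  also have "\<dots> = (\<Sum>j\<in>UNIV \<inter> {..k}. 1)" by (rule sum.inter_restrict[symmetric]) simp
  finally have s2: "(\<Sum>j\<in>UNIV. ind j) = real (card {..k})" by simp
  have "(\<Sum>j\<in>UNIV. (w j - ind j) * e j) \<le> (\<Sum>j\<in>UNIV. (w j - ind j) * e k)"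
  proof (rule sum_mono)
    fix j
    show "(w j - ind j) * e j \<le> (w j - ind j) * e k"
    proof (cases "j \<le> k")
      case True
      then have "e k \<le> e j" using assms(3) by (cases "j = k") auto
      then show ?thesis using True assms(1) by (simp add: ind_def mult_left_mono_neg)
    next
      case False
      then have "e j \<le> e k" using assms(3) by auto
      then show ?thesis using False assms(1) by (simp add: ind_def mult_left_mono)
    qed
  qed
  also have "\<dots> = (\<Sum>j\<in>UNIV. (w j - ind j)) * e k"
    by (rule sum_distrib_right[symmetric])
  also have "\<dots> = ((\<Sum>j\<in>UNIV. w j) - (\<Sum>j\<in>UNIV. ind j)) * e k"
    by (simp only: sum_subtractf)
  also have "\<dots> = 0" using assms(2) s2 by simp
  finally have "(\<Sum>j\<in>UNIV. (w j - ind j) * e j) \<le> 0" .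
  moreover have "(\<Sum>j\<in>UNIV. (w j - ind j) * e j) = (\<Sum>j\<in>UNIV. w j * e j) - (\<Sum>j\<in>UNIV. ind j * e j)"
    by (simp only: left_diff_distrib sum_subtractf)
  ultimately show ?thesis using s1 by linarith
qed

lemma sort_exists:
  fixes f :: "'b \<Rightarrow> real" and A :: "'a::linorder set"
  assumes "finite A" "finite B" "card A = card B"
  shows "\<exists>\<sigma>. bij_betw \<sigma> A B \<and> (\<forall>i\<in>A. \<forall>j\<in>A. i < j \<longrightarrow> f (\<sigma> j) \<le> f (\<sigma> i))"
  using assms
proof (induction "card A" arbitrary: A B)
  case 0
  then have "A = {}" "B = {}" by auto
  then show ?case by (auto simp: bij_betw_def)
next
  case (Suc n)
  define m where "m = Max A"
  have ne: "A \<noteq> {}" using Suc.hyps(2) by auto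
  have mA: "m \<in> A" using Suc.prems(1) ne by (simp add: m_def)
  have mmax: "\<forall>i\<in>A. i \<le> m" using Suc.prems(1) by (simp add: m_def)
  have neB: "B \<noteq> {}" using Suc.hyps(2) Suc.prems(3) by auto
  obtain v where v: "v \<in> f ` B" "\<not> (\<exists>x\<in>f ` B. x < v)"
    using ex_min_if_finite[of "f ` B"] Suc.prems(2) neB by auto
  then obtain b where bB: "b \<in> B" and bmin: "\<forall>b'\<in>B. f b \<le> f b'"
    by (metis image_iff not_le)
  define A' where "A' = A - {m}"
  define B' where "B' = B - {b}"
  have "n = card A'" using Suc.hyps(2) mA by (simp add: A'_def)
  moreover have "card A' = card B'" using Suc.hyps(2) Suc.prems(3) mA bB by (simp add: A'_def B'_def)
  ultimately obtain \<sigma>' where s': "bij_betw \<sigma>' A' B'"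
     and mono': "\<forall>i\<in>A'. \<forall>j\<in>A'. i < j \<longrightarrow> f (\<sigma>' j) \<le> f (\<sigma>' i)"
    using Suc.hyps(1)[of A' B'] Suc.prems(1,2) by (auto simp: A'_def B'_def)
  define \<sigma> where "\<sigma> = \<sigma>'(m := b)"
  have "bij_betw \<sigma> A B"
  proof -
    have img: "\<forall>y\<in>A'. \<sigma>' y \<noteq> b" using s' by (auto simp: bij_betw_def B'_def)
    have inj': "inj_on \<sigma>' A'" using s' by (simp add: bij_betw_def)
    have "inj_on \<sigma> A"
    proof (rule inj_onI)
      fix x y assume xy: "x \<in> A" "y \<in> A" "\<sigma> x = \<sigma> y"
      show "x = y"
      proof (cases "x = m"; cases "y = m")
        assume "x \<noteq> m" "y \<noteq> m"
        then show ?thesis using xy inj' by (auto simp: \<sigma>_def A'_def inj_on_def)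
      next
        assume "x = m" "y \<noteq> m"
        then show ?thesis using xy img by (auto simp: \<sigma>_def A'_def)
      next
        assume "x \<noteq> m" "y = m"
        then show ?thesis using xy img by (auto simp: \<sigma>_def A'_def)
      qed simp
    qed
    moreover have "\<sigma> ` A = B"
    proof -
      have A: "A = insert m A'" using mA by (auto simp: A'_def)
      have "\<sigma> ` A' = \<sigma>' ` A'" by (auto simp: \<sigma>_def A'_def)
      then have i1: "\<sigma> ` A' = B'" using s' by (simp add: bij_betw_def)
      have i2: "\<sigma> m = b" by (simp add: \<sigma>_def)
      have "\<sigma> ` A = insert (\<sigma> m) (\<sigma> ` A')" by (subst A) simp
      then have "\<sigma> ` A = insert b B'" using i1 i2 by simp
      then show ?thesis using bB by (auto simp: B'_def)
    qed
    ultimately show ?thesis by (simp add: bij_betw_def)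
  qed
  moreover have "\<forall>i\<in>A. \<forall>j\<in>A. i < j \<longrightarrow> f (\<sigma> j) \<le> f (\<sigma> i)"
  proof (intro ballI impI)
    fix i j assume ij: "i \<in> A" "j \<in> A" "i < j"
    then have im: "i \<noteq> m" using mmax by force
    show "f (\<sigma> j) \<le> f (\<sigma> i)"
    proof (cases "j = m")
      case True
      have "\<sigma>' i \<in> B" using s' ij im by (auto simp: bij_betw_def A'_def B'_def)
      then show ?thesis using True bmin im by (simp add: \<sigma>_def)
    next
      case False
      then show ?thesis using mono' ij im by (simp add: \<sigma>_def A'_def)
    qed
  qed
  ultimately show ?case by blast
qed

lemma pigeon_up:
  fixes \<sigma> :: "'n::{finite,linorder} \<Rightarrow> 'n"
  assumes "inj \<sigma>"
  shows "\<exists>i\<le>k. k \<le> \<sigma> i"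
proof (rule ccontr)
  assume "\<not> ?thesis"
  then have "\<forall>i. i \<le> k \<longrightarrow> \<sigma> i < k" by (metis not_le)
  then have "\<sigma> ` {..k} \<subseteq> {..<k}" by auto
  then have "card (\<sigma> ` {..k}) \<le> card {..<k::'n}" by (simp add: card_mono)
  moreover have "card (\<sigma> ` {..k}) = card {..k}" using assms by (simp add: card_image inj_on_subset)
  moreover have "{..k} = insert k {..<k}" by auto
  ultimately show False by simp
qed

lemma pigeon_down:
  fixes \<sigma> :: "'n::{finite,linorder} \<Rightarrow> 'n"
  assumes "inj \<sigma>"
  shows "\<exists>i\<ge>k. \<sigma> i \<le> k"
proof (rule ccontr)
  assume "\<not> ?thesis"
  then have "\<forall>i. k \<le> i \<longrightarrow> k < \<sigma> i" by (metis not_le)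
  then have "\<sigma> ` {k..} \<subseteq> {k<..}" by auto
  then have "card (\<sigma> ` {k..}) \<le> card ({k<..} :: 'n set)" by (simp add: card_mono)
  moreover have "card (\<sigma> ` {k..}) = card {k..}" using assms by (simp add: card_image inj_on_subset)
  moreover have "{k..} = insert k {k<..}" by auto
  ultimately show False by simp
qed

lemma sorted_bound:
  fixes d lo :: "'n::{finite,linorder} \<Rightarrow> real" and \<sigma> :: "'n \<Rightarrow> 'n"
  assumes "bij \<sigma>" "\<forall>i j. i < j \<longrightarrow> d (\<sigma> j) \<le> d (\<sigma> i)"
    and "\<forall>i j. i < j \<longrightarrow> lo j \<le> lo i" and "\<forall>j. \<bar>d j - lo j\<bar> \<le> eps"
  shows "\<bar>d (\<sigma> k) - lo k\<bar> \<le> eps"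
proof -
  have inj: "inj \<sigma>" using assms(1) by (simp add: bij_is_inj)
  have dm: "\<And>i j. i \<le> j \<Longrightarrow> d (\<sigma> j) \<le> d (\<sigma> i)" using assms(2) by (metis order.order_iff_strict order_refl)
  have lm: "\<And>i j. i \<le> j \<Longrightarrow> lo j \<le> lo i" using assms(3) by (metis order.order_iff_strict order_refl)
  obtain i where i: "i \<le> k" "k \<le> \<sigma> i" using pigeon_up[OF inj] by blast
  obtain j where j: "k \<le> j" "\<sigma> j \<le> k" using pigeon_down[OF inj] by blast
  have "d (\<sigma> k) \<le> d (\<sigma> i)" using dm i by simp
  moreover have "d (\<sigma> i) \<le> lo (\<sigma> i) + eps" using assms(4) by (smt (verit))
  moreover have "lo (\<sigma> i) \<le> lo k" using lm i by simp
  moreover have "d (\<sigma> j) \<le> d (\<sigma> k)" using dm j by simp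
  moreover have "lo (\<sigma> j) - eps \<le> d (\<sigma> j)" using assms(4) by (smt (verit))
  moreover have "lo k \<le> lo (\<sigma> j)" using lm j by simp
  ultimately show ?thesis by linarith
qed

lemma core:
  fixes lam d :: "'n::{finite,linorder} \<Rightarrow> real" and P :: "'n \<Rightarrow> 'n \<Rightarrow> real" and \<sigma> :: "'n \<Rightarrow> 'n"
  assumes lam: "\<forall>i j. i < j \<longrightarrow> lam j \<le> lam i"
    and P0: "\<forall>i j. 0 \<le> P i j" and row: "\<forall>i. (\<Sum>j\<in>UNIV. P i j) = 1" and col: "\<forall>j. (\<Sum>i\<in>UNIV. P i j) = 1"
    and bij: "bij \<sigma>" and srt: "\<forall>i j. i < j \<longrightarrow> d (\<sigma> j) \<le> d (\<sigma> i)"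
  shows "(\<Sum>i\<in>UNIV. \<Sum>j\<in>UNIV. P i j * lam i * d j) \<le> (\<Sum>i\<in>UNIV. lam i * d (\<sigma> i))"
proof -
  define e where "e = (\<lambda>m. d (\<sigma> m))"
  define c where "c = (\<lambda>i. \<Sum>m\<in>UNIV. P i (\<sigma> m) * e m)"
  have reidx: "\<And>g::'n\<Rightarrow>real. (\<Sum>j\<in>UNIV. g j) = (\<Sum>m\<in>UNIV. g (\<sigma> m))"
    using bij by (metis bij_betw_def sum.reindex_bij_betw)
  have lhs: "(\<Sum>i\<in>UNIV. \<Sum>j\<in>UNIV. P i j * lam i * d j) = (\<Sum>i\<in>UNIV. lam i * c i)"
  proof (rule sum.cong[OF refl])
    fix i
    have "(\<Sum>j\<in>UNIV. P i j * lam i * d j) = (\<Sum>m\<in>UNIV. P i (\<sigma> m) * lam i * d (\<sigma> m))"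
      by (rule reidx)
    also have "\<dots> = lam i * c i" by (simp add: c_def e_def sum_distrib_left algebra_simps)
    finally show "(\<Sum>j\<in>UNIV. P i j * lam i * d j) = lam i * c i" .
  qed
  have swap: "\<And>K. (\<Sum>i\<in>K. c i) = (\<Sum>m\<in>UNIV. (\<Sum>i\<in>K. P i (\<sigma> m)) * e m)"
    unfolding c_def by (simp add: sum_distrib_right sum.swap[of _ _ UNIV])
  have pre: "\<forall>k. (\<Sum>i\<in>{..k}. c i) \<le> (\<Sum>i\<in>{..k}. e i)"
  proof
    fix k :: 'n
    have "(\<Sum>m\<in>UNIV. (\<Sum>i\<in>{..k}. P i (\<sigma> m)) * e m) \<le> (\<Sum>i\<in>{..k}. e i)"
    proof (rule weights)
      show "\<forall>j. 0 \<le> (\<Sum>i\<in>{..k}. P i (\<sigma> j)) \<and> (\<Sum>i\<in>{..k}. P i (\<sigma> j)) \<le> 1"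
      proof
        fix j
        have "(\<Sum>i\<in>{..k}. P i (\<sigma> j)) \<le> (\<Sum>i\<in>UNIV. P i (\<sigma> j))"
          by (rule sum_mono2) (use P0 in auto)
        then show "0 \<le> (\<Sum>i\<in>{..k}. P i (\<sigma> j)) \<and> (\<Sum>i\<in>{..k}. P i (\<sigma> j)) \<le> 1"
          using col P0 by (simp add: sum_nonneg)
      qed
      have "(\<Sum>j\<in>UNIV. \<Sum>i\<in>{..k}. P i (\<sigma> j)) = (\<Sum>i\<in>{..k}. \<Sum>j\<in>UNIV. P i (\<sigma> j))"
        by (rule sum.swap)
      also have "\<dots> = (\<Sum>i\<in>{..k}. 1)"
        using row reidx by (metis (no_types, lifting) sum.cong)
      finally show "(\<Sum>j\<in>UNIV. \<Sum>i\<in>{..k}. P i (\<sigma> j)) = real (card {..k})" by simp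
      show "\<forall>i j. i < j \<longrightarrow> e j \<le> e i" using srt by (simp add: e_def)
    qed
    then show "(\<Sum>i\<in>{..k}. c i) \<le> (\<Sum>i\<in>{..k}. e i)" by (simp add: swap)
  qed
  have tot: "(\<Sum>i\<in>UNIV. c i) = (\<Sum>i\<in>UNIV. e i)"
    using swap[of UNIV] col by simp
  have "(\<Sum>i\<in>UNIV. lam i * c i) \<le> (\<Sum>i\<in>UNIV. lam i * e i)"
    by (rule abel_univ[OF lam pre tot])
  then show ?thesis by (simp add: lhs e_def)
qed

definition fsq :: "real^'n^'m \<Rightarrow> real" where
  "fsq A = (\<Sum>i\<in>UNIV. \<Sum>j\<in>UNIV. (A $ i $ j)^2)"

lemma orth_norm: "orthogonal_matrix (Q::real^'n^'n) \<Longrightarrow> norm (Q *v x) = norm x"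
  by (metis orthogonal_transformation_matrix orthogonal_transformation_norm matrix_of_matrix_vector_mul matrix_vector_mul_linear)

lemma norm_sq_cart: "(norm (x::real^'n))^2 = (\<Sum>i\<in>UNIV. (x$i)^2)"
  by (simp add: norm_eq_sqrt_inner inner_vec_def power2_eq_square sum_nonneg)

lemma fsq_col: "fsq (A::real^'n^'m) = (\<Sum>j\<in>UNIV. (norm (column j A))^2)"
  unfolding fsq_def norm_sq_cart column_def by (simp, rule sum.swap)

lemma col_mult: "column j (Q ** X) = Q *v column j X"
  by (simp add: column_def matrix_matrix_mult_def matrix_vector_mult_def vec_eq_iff)

lemma fsq_left: "orthogonal_matrix (Q::real^'n^'n) \<Longrightarrow> fsq (Q ** X) = fsq X"
  by (simp add: fsq_col col_mult orth_norm)

lemma fsq_transpose: "fsq (transpose A) = fsq A"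
  unfolding fsq_def transpose_def by (simp, rule sum.swap)

lemma fsq_right: "orthogonal_matrix (Q::real^'n^'n) \<Longrightarrow> fsq (X ** transpose Q) = fsq X"
  by (metis fsq_left fsq_transpose matrix_transpose_mul transpose_transpose)

lemma frob_fsq: "frob_norm A = sqrt (fsq A)"
  by (simp add: frob_norm_def fsq_def)


lemma sum_single:
  assumes "\<And>j. j \<noteq> i \<Longrightarrow> f j = (0::real)"
  shows "(\<Sum>j\<in>(UNIV::'n::finite set). f j) = f i"
proof -
  have "(\<Sum>j\<in>(UNIV::'n set). f j) = (\<Sum>j\<in>UNIV. if j = i then f i else 0)"
    by (rule sum.cong) (use assms in auto)
  then show ?thesis by simp
qed

lemma mm_sub_left: "(A::real^'n^'m) ** (B - C) = A ** B - A ** C"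
  by (simp add: vec_eq_iff matrix_matrix_mult_def sum_subtractf right_diff_distrib)

lemma mm_sub_right: "((B::real^'n^'m) - C) ** A = B ** A - C ** A"
  by (simp add: vec_eq_iff matrix_matrix_mult_def sum_subtractf left_diff_distrib)

lemma diag_right: "diag_mat D \<Longrightarrow> ((W::real^'n^'m) ** D) $ i $ l = W $ i $ l * D $ l $ l"
  unfolding matrix_matrix_mult_def
  apply simp
  apply (rule sum_single[where i=l])
  apply (auto simp: diag_mat_def)
  done

lemma fsq_diag: "diag_mat A \<Longrightarrow> fsq A = (\<Sum>i\<in>UNIV. (A $ i $ i)^2)"
  unfolding fsq_def
  apply (rule sum.cong[OF refl])
  apply (rule sum_single)
  apply (auto simp: diag_mat_def)
  done

lemma fsq_diff: "fsq ((A::real^'n^'m) - B) = fsq A + fsq B - 2 * (\<Sum>i\<in>UNIV. \<Sum>j\<in>UNIV. A $ i $ j * B $ i $ j)"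
proof -
  have "\<And>i j. ((A - B) $ i $ j)^2 = (A $ i $ j)^2 + (B $ i $ j)^2 - 2 * (A $ i $ j * B $ i $ j)"
    by (simp add: power2_diff)
  then show ?thesis unfolding fsq_def
    by (simp only: sum_subtractf sum.distrib sum_distrib_left)
qed

lemma inner_diag: "diag_mat A \<Longrightarrow> (\<Sum>i\<in>UNIV. \<Sum>j\<in>UNIV. A $ i $ j * B $ i $ j) = (\<Sum>i\<in>UNIV. A $ i $ i * B $ i $ i)"
  apply (rule sum.cong[OF refl])
  apply (rule sum_single)
  apply (auto simp: diag_mat_def)
  done

lemma conj_diag: "diag_mat D \<Longrightarrow> ((W::real^'n^'n) ** D ** transpose W) $ i $ i = (\<Sum>k\<in>UNIV. (W $ i $ k)^2 * D $ k $ k)"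
  by (simp add: matrix_matrix_mult_def[of "W ** D"] diag_right transpose_def power2_eq_square algebra_simps)

lemma orth_rows: "orthogonal_matrix (W::real^'n^'n) \<Longrightarrow> (\<Sum>k\<in>UNIV. (W $ i $ k)^2) = 1"
proof -
  assume "orthogonal_matrix W"
  then have "(W ** transpose W) $ i $ i = 1" by (simp add: orthogonal_matrix_def mat_def)
  then show ?thesis by (simp add: matrix_matrix_mult_def transpose_def power2_eq_square)
qed

lemma orth_cols: "orthogonal_matrix (W::real^'n^'n) \<Longrightarrow> (\<Sum>i\<in>UNIV. (W $ i $ k)^2) = 1"
proof -
  assume "orthogonal_matrix W"
  then have "(transpose W ** W) $ k $ k = 1" by (simp add: orthogonal_matrix_def mat_def)
  then show ?thesis by (simp add: matrix_matrix_mult_def transpose_def power2_eq_square)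
qed

lemma spec_diag_le: "spec_norm (A::real^'n^'n) \<le> eps \<Longrightarrow> \<bar>A $ k $ k\<bar> \<le> eps"
  unfolding spec_norm_def using matrix_component_le_onorm[of A k k] by linarith

lemma diag_spec: 
  assumes "diag_mat (A::real^'n^'n)" "\<forall>k. \<bar>A $ k $ k\<bar> \<le> eps"
  shows "spec_norm A \<le> eps"
  unfolding spec_norm_def
proof (rule onorm_le)
  fix x :: "real^'n"
  have Ax: "\<And>i. (A *v x) $ i = A $ i $ i * x $ i"
  proof -
    fix i
    show "(A *v x) $ i = A $ i $ i * x $ i" unfolding matrix_vector_mult_def
      apply simp
      apply (rule sum_single[where i=i])
      using assms(1) apply (auto simp: diag_mat_def)
      done
  qed
  have e0: "0 \<le> eps" using assms(2) by (meson abs_ge_zero order_trans)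
  have "(norm (A *v x))^2 \<le> (eps * norm x)^2"
  proof -
    have "(norm (A *v x))^2 = (\<Sum>i\<in>UNIV. (A $ i $ i * x $ i)^2)" by (simp add: norm_sq_cart Ax)
    also have "\<dots> \<le> (\<Sum>i\<in>UNIV. eps^2 * (x $ i)^2)"
    proof (rule sum_mono)
      fix i
      have "(A $ i $ i)^2 \<le> eps^2" using assms(2) e0 by (metis abs_le_square_iff abs_of_nonneg)
      then show "(A $ i $ i * x $ i)^2 \<le> eps^2 * (x $ i)^2"
        by (simp add: power_mult_distrib mult_right_mono)
    qed
    also have "\<dots> = (eps * norm x)^2" by (simp add: power_mult_distrib norm_sq_cart sum_distrib_left)
    finally show ?thesis .
  qed
  then show "norm (A *v x) \<le> eps * norm x"
    using e0 by (meson norm_ge_zero power2_le_imp_le zero_le_mult_iff)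
qed

theorem theorem4:
  fixes S Q Lam Lo Le_star :: "real^('n::{finite,wellorder})^('n::{finite,wellorder})" and eps :: real
  assumes "symmetric_mat S"
    and "orthogonal_matrix Q" and "diag_mat Lam" and "nonincr_diag Lam"
    and "S = Q ** Lam ** transpose Q"
    and "diag_mat Lo" and "nonincr_diag Lo"
    and "0 \<le> eps"
    and "diag_mat Le_star" and "spec_norm Le_star \<le> eps"
    and "\<forall>Le. diag_mat Le \<and> spec_norm Le \<le> eps \<longrightarrow>
           frob_norm (Lam - Lo - Le_star) \<le> frob_norm (Lam - Lo - Le)"
  shows "Q ** (Lo + Le_star) ** transpose Q \<in> M_eps Lo eps \<and>
         (\<forall>M \<in> M_eps Lo eps. frob_norm (S - Q ** (Lo + Le_star) ** transpose Q) \<le> frob_norm (S - M))"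
proof
  note oQ = assms(2) and dLam = assms(3) and Sdef = assms(5) and dLo = assms(6)
  show "Q ** (Lo + Le_star) ** transpose Q \<in> M_eps Lo eps"
    unfolding M_eps_def using assms(2,9,10) by blast
  have QQ: "Q ** transpose Q = mat 1" using oQ by (simp add: orthogonal_matrix_def)
  have conj: "\<And>X Y. Q ** X ** transpose Q - Q ** Y ** transpose Q = Q ** (X - Y) ** transpose Q"
    by (simp add: mm_sub_left mm_sub_right)
  define lam where "lam = (\<lambda>i. Lam $ i $ i)"
  define lo where "lo = (\<lambda>i. Lo $ i $ i)"
  have lam_mono: "\<forall>i j. i < j \<longrightarrow> lam j \<le> lam i" using assms(4) by (simp add: nonincr_diag_def lam_def)
  have lo_mono: "\<forall>i j. i < j \<longrightarrow> lo j \<le> lo i" using assms(7) by (simp add: nonincr_diag_def lo_def)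
  have lhs: "frob_norm (S - Q ** (Lo + Le_star) ** transpose Q) = frob_norm (Lam - Lo - Le_star)"
  proof -
    have "S - Q ** (Lo + Le_star) ** transpose Q = Q ** (Lam - Lo - Le_star) ** transpose Q"
      by (simp add: Sdef conj diff_diff_eq)
    then show ?thesis by (simp add: frob_fsq fsq_left fsq_right oQ)
  qed
  show "\<forall>M \<in> M_eps Lo eps. frob_norm (S - Q ** (Lo + Le_star) ** transpose Q) \<le> frob_norm (S - M)"
  proof
    fix M assume "M \<in> M_eps Lo eps"
    then obtain V Le where Mdef: "M = V ** (Lo + Le) ** transpose V" and oV: "orthogonal_matrix V"
      and dLe: "diag_mat Le" and sLe: "spec_norm Le \<le> eps"
      unfolding M_eps_def by blast
    define D where "D = Lo + Le"
    define W where "W = transpose Q ** V"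
    define B where "B = W ** D ** transpose W"
    define d where "d = (\<lambda>i. D $ i $ i)"
    have oW: "orthogonal_matrix W" unfolding W_def using oQ oV by (simp add: orthogonal_matrix_mul)
    have dD: "diag_mat D" using dLo dLe by (simp add: D_def diag_mat_def)
    have "Q ** B ** transpose Q = (Q ** transpose Q) ** V ** D ** transpose V ** (Q ** transpose Q)"
      by (simp add: B_def W_def matrix_transpose_mul matrix_mul_assoc)
    then have "Q ** B ** transpose Q = M" by (simp add: QQ Mdef D_def)
    then have "S - M = Q ** (Lam - B) ** transpose Q" using conj[of Lam B] Sdef by simp
    then have f1: "fsq (S - M) = fsq (Lam - B)" by (simp add: fsq_left fsq_right oQ)
    have fB: "fsq B = (\<Sum>i\<in>UNIV. (d i)^2)"
      unfolding B_def by (simp add: fsq_left fsq_right oW fsq_diag[OF dD] d_def)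
    have fL: "fsq Lam = (\<Sum>i\<in>UNIV. (lam i)^2)" by (simp add: fsq_diag[OF dLam] lam_def)
    have iB: "(\<Sum>i\<in>UNIV. \<Sum>j\<in>UNIV. Lam $ i $ j * B $ i $ j)
        = (\<Sum>i\<in>UNIV. \<Sum>k\<in>UNIV. (W $ i $ k)^2 * lam i * d k)"
      unfolding inner_diag[OF dLam] B_def conj_diag[OF dD]
      by (simp add: lam_def d_def sum_distrib_left algebra_simps)
    have fSM: "fsq (S - M) = (\<Sum>i\<in>UNIV. (lam i)^2) + (\<Sum>i\<in>UNIV. (d i)^2)
        - 2 * (\<Sum>i\<in>UNIV. \<Sum>k\<in>UNIV. (W $ i $ k)^2 * lam i * d k)"
      using f1 fsq_diff[of Lam B] fB fL iB by simp
    obtain \<sigma> :: "'n \<Rightarrow> 'n" where bs': "bij \<sigma>" and srt': "\<forall>i j. i < j \<longrightarrow> d (\<sigma> j) \<le> d (\<sigma> i)"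
      using sort_exists[of "UNIV::'n set" "UNIV::'n set" d] by auto
    have bs: "bij_betw \<sigma> UNIV UNIV" using bs' by simp
    have dlo: "\<forall>j. \<bar>d j - lo j\<bar> \<le> eps"
      using spec_diag_le[OF sLe] by (simp add: d_def lo_def D_def)
    define Le' where "Le' = (\<chi> i j. if i = j then d (\<sigma> i) - lo i else 0)"
    have dLe': "diag_mat Le'" by (simp add: Le'_def diag_mat_def)
    have sLe': "spec_norm Le' \<le> eps"
    proof (rule diag_spec[OF dLe'])
      show "\<forall>k. \<bar>Le' $ k $ k\<bar> \<le> eps"
        using sorted_bound[OF bs' srt' lo_mono dlo] by (simp add: Le'_def)
    qed
    have core': "(\<Sum>i\<in>UNIV. \<Sum>k\<in>UNIV. (W $ i $ k)^2 * lam i * d k) \<le> (\<Sum>i\<in>UNIV. lam i * d (\<sigma> i))"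
    proof (rule core[OF lam_mono _ _ _ bs' srt'])
      show "\<forall>i j. 0 \<le> (W $ i $ j)^2" by simp
      show "\<forall>i. (\<Sum>j\<in>UNIV. (W $ i $ j)^2) = 1" using orth_rows[OF oW] by simp
      show "\<forall>j. (\<Sum>i\<in>UNIV. (W $ i $ j)^2) = 1" using orth_cols[OF oW] by simp
    qed
    have dR: "diag_mat (Lam - Lo - Le')" using dLam dLo dLe' by (simp add: diag_mat_def)
    have fR: "fsq (Lam - Lo - Le') = (\<Sum>i\<in>UNIV. (lam i - d (\<sigma> i))^2)"
      unfolding fsq_diag[OF dR] by (simp add: Le'_def lam_def lo_def)
    have fR2: "(\<Sum>i\<in>UNIV. (lam i - d (\<sigma> i))^2) = (\<Sum>i\<in>UNIV. (lam i)^2) + (\<Sum>i\<in>UNIV. (d (\<sigma> i))^2) - 2 * (\<Sum>i\<in>UNIV. lam i * d (\<sigma> i))"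
    proof -
      have "\<And>i. (lam i - d (\<sigma> i))^2 = (lam i)^2 + (d (\<sigma> i))^2 - 2 * (lam i * d (\<sigma> i))"
        by (simp add: power2_diff)
      then show ?thesis by (simp only: sum_subtractf sum.distrib sum_distrib_left)
    qed
    have fR3: "(\<Sum>i\<in>UNIV. (d (\<sigma> i))^2) = (\<Sum>i\<in>UNIV. (d i)^2)"
      by (rule sum.reindex_bij_betw[OF bs])
    have "fsq (Lam - Lo - Le') \<le> fsq (S - M)" using fR fR2 fR3 fSM core' by linarith
    then have "frob_norm (Lam - Lo - Le') \<le> frob_norm (S - M)" by (simp add: frob_fsq)
    moreover have "frob_norm (Lam - Lo - Le_star) \<le> frob_norm (Lam - Lo - Le')"
      using assms(11) dLe' sLe' by blast
    ultimately show "frob_norm (S - Q ** (Lo + Le_star) ** transpose Q) \<le> frob_norm (S - M)"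
      using lhs by linarith
  qed
qed

end
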